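(* Let $\kappa_n>0$, $\gamma>0$ and $\chi_n,\Omega,\tilde\omega_n\in\mathbb{R}$, and put $Q_n=-(\gamma+i\Omega-i\tilde\omega_n)$ and $S_n=\gamma\chi_n/2$. Let $F_n:[0,\infty)\to\mathbb{C}$ be the solution of $$\frac{\mathrm{d}}{\mathrm{d}t}F_n(t)=\kappa_nF_n(t)^2+Q_nF_n(t)+S_n,\qquad F_n(0)=0 .$$ If $\tilde\omega_n=\Omega$ and $4\kappa_nS_n-Q_n^2\le 0$, then $F_n(t)$ converges to a constant as $t\to\infty$. Consequently the time-varying coefficients $\kappa_n(F_n(t)+F_n^*(t))$, $\kappa_nF_n^*(t)$ and $\kappa_nF_n(t)$ in the evolution equations of $\langle\sigma_n^+\sigma_n^-\rangle$, $\langle\sigma_n^+a\rangle$ and $\langle\sigma_n^-a^\dagger\rangle$ converge to constants, i.e. these trajectories become Markovian as $t\to\infty$.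
   Context: Setting: an $N$-level ladder atom coupled to a cavity mode (annihilation operator $a$) and to a non-Markovian bosonic environment with memory kernel $\alpha(t,s)=\frac{\gamma}{2}e^{-\gamma|t-s|-i\Omega(t-s)}$; $\sigma_n^-=|n-1\rangle\langle n|$, $\sigma_n^+=|n\rangle\langle n-1|$, $\tilde\omega_n$ is the transition frequency between levels $n-1$ and $n$, $\kappa_n$ is the decay rate of level $n$ to the environment and $\chi_n$ a real environmental constant. The non-Markovian decay is encoded by the complex function $F_n(t)$ defined by the Riccati equation above; the interaction is called Markovian when $F_n$ is constant, and the dynamics is said to converge to Markovian when $F_n(t)$ converges to a constant as $t\to\infty$. With $\tilde g_n=g_ne^{i\Delta_nt}$, the mean values satisfy, among others, $\frac{d}{dt}\langle\sigma_n^+ a\rangle=-i\Delta_n\langle\sigma_n^+a\rangle-i\tilde g_n^*\langle\sigma_n^+\sigma_n^-\rangle+i\tilde g_n^*\langle a^\dagger a\rangle-F_n^*(t)\kappa_n\langle\sigma_n^+a\rangle$ (and its conjugate for $\langle\sigma_n^-a^\dagger\rangle$), and the population equation for $\langle\sigma_n^+\sigma_n^-\rangle$ contains the decay term $-(F_n+F_n^* )\kappa_n\langle\sigma_n^+\sigma_n^-\rangle$. *)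

theory Defs
  imports "HOL-Analysis.Analysis"
begin

end

theory Submission
  imports Defs
begin

lemma gronwall_zero:
  fixes y c :: "real \<Rightarrow> real"
  assumes der: "\<And>t. t \<ge> 0 \<Longrightarrow> (y has_real_derivative (y t * c t)) (at t within {0..})"
  and cc: "continuous_on {0..} c"
  and z: "t0 \<ge> 0" "y t0 = 0" and t: "t \<ge> 0"
  shows "y t = 0"
proof -
  define T where "T = max t t0"
  have "compact (c ` {0..T})" using cc by (intro compact_continuous_image) (auto intro: continuous_on_subset)
  then obtain M where M: "\<And>s. s \<in> {0..T} \<Longrightarrow> \<bar>c s\<bar> \<le> M"
    using compact_imp_bounded bounded_real by (metis imageI)
  have yc: "continuous_on {0..} y"
    by (rule continuous_on_vector_derivative[where f'="\<lambda>t. y t * c t"])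
       (use der in \<open>auto simp: has_real_derivative_iff_has_vector_derivative\<close>)
  have dat: "(y has_real_derivative (y s * c s)) (at s)" if "s > 0" for s
    using der[of s] that at_within_interior[of s "{0..}"] by simp
  show ?thesis
  proof (cases "t0 \<le> t")
    case True
    define h where "h x = (y x)^2 * exp (- (2*M*x))" for x
    have "h t \<le> h t0"
    proof (rule DERIV_nonpos_imp_decreasing_open[OF True])
      fix s assume s: "t0 < s" "s < t"
      have "(h has_real_derivative (2 * y s * (y s * c s) * exp (- (2*M* s)) + (y s)^2 * (exp (- (2*M* s)) * (- (2*M))))) (at s)"
        unfolding h_def using s z
        by (auto intro!: derivative_eq_intros dat)
      moreover have "2 * y s * (y s * c s) * exp (- (2*M* s)) + (y s)^2 * (exp (- (2*M* s)) * (- (2*M))) = 2 * (y s)^2 * exp (- (2*M* s)) * (c s - M)"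
        by (simp add: algebra_simps power2_eq_square)
      moreover have "c s - M \<le> 0" using M[of s] s z unfolding T_def by auto
      ultimately show "\<exists>d. (h has_real_derivative d) (at s) \<and> d \<le> 0"
        by (metis mult_nonneg_nonpos zero_le_power2 exp_ge_zero mult_nonneg_nonneg zero_le_numeral)
    next
      show "continuous_on {t0..t} h" unfolding h_def using z
        by (intro continuous_intros continuous_on_subset[OF yc]) auto
    qed
    then have "(y t)^2 * exp (- (2*M* t)) \<le> 0" using z unfolding h_def by simp
    then show ?thesis by (smt (verit) exp_gt_zero mult_pos_pos zero_less_power2)
  next
    case False
    define h where "h x = (y x)^2 * exp (2*M*x)" for x
    have "h t \<le> h t0"
    proof (rule DERIV_nonneg_imp_increasing_open[of t t0 h])
      show "t \<le> t0" using False by simp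
      fix s assume s: "t < s" "s < t0"
      have "(h has_real_derivative (2 * y s * (y s * c s) * exp (2*M* s) + (y s)^2 * (exp (2*M* s) * (2*M)))) (at s)"
        unfolding h_def using s t
        by (auto intro!: derivative_eq_intros dat)
      moreover have "2 * y s * (y s * c s) * exp (2*M* s) + (y s)^2 * (exp (2*M* s) * (2*M)) = 2 * (y s)^2 * exp (2*M* s) * (c s + M)"
        by (simp add: algebra_simps power2_eq_square)
      moreover have "c s + M \<ge> 0" using M[of s] s t unfolding T_def by auto
      ultimately show "\<exists>d. (h has_real_derivative d) (at s) \<and> d \<ge> 0"
        by (metis zero_le_power2 exp_ge_zero mult_nonneg_nonneg zero_le_numeral)
    next
      show "continuous_on {t..t0} h" unfolding h_def using t
        by (intro continuous_intros continuous_on_subset[OF yc]) auto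
    qed
    then have "(y t)^2 * exp (2*M* t) \<le> 0" using z unfolding h_def by simp
    then show ?thesis by (smt (verit) exp_gt_zero mult_pos_pos zero_less_power2)
  qed
qed


lemma decr_conv:
  fixes f :: "real \<Rightarrow> real"
  assumes mono: "\<And>a b. 0 \<le> a \<Longrightarrow> a \<le> b \<Longrightarrow> f b \<le> f a"
    and lb: "\<And>t. t \<ge> 0 \<Longrightarrow> f t \<ge> 0"
  shows "\<exists>L. (f \<longlongrightarrow> L) at_top"
proof -
  define L where "L = Inf (f ` {0..})"
  have bdd: "bdd_below (f ` {0..})" using lb by (auto intro!: bdd_belowI[of _ 0])
  show ?thesis
  proof (intro exI decreasing_tendsto)
    show "\<forall>\<^sub>F n in at_top. L \<le> f n"
      using eventually_ge_at_top[of "0::real"]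
      by eventually_elim (auto simp: L_def intro!: cInf_lower bdd)
  next
    fix x assume "L < x"
    then obtain a where a: "a \<in> {0..}" "f a < x"
      unfolding L_def using cInf_lessD[of "f ` {0..}" x] by auto
    show "\<forall>\<^sub>F n in at_top. f n < x"
      using eventually_ge_at_top[of a]
      by eventually_elim (use a mono in \<open>force\<close>)
  qed
qed

lemma sign_const:
  fixes y :: "real \<Rightarrow> real"
  assumes c: "continuous_on {0..} y" and nz: "\<And>t. t \<ge> 0 \<Longrightarrow> y t \<noteq> 0"
    and t: "t \<ge> 0"
  shows "y 0 > 0 \<Longrightarrow> y t > 0" and "y 0 < 0 \<Longrightarrow> y t < 0"
proof -
  have c': "continuous_on {0..t} y" by (rule continuous_on_subset[OF c]) auto
  show "y 0 > 0 \<Longrightarrow> y t > 0"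
  proof (rule ccontr)
    assume "y 0 > 0" "\<not> y t > 0"
    then obtain x where "0 \<le> x" "x \<le> t" "y x = 0" using IVT2'[of y t 0 0, OF _ _ t c'] by auto
    then show False using nz by auto
  qed
  show "y 0 < 0 \<Longrightarrow> y t < 0"
  proof (rule ccontr)
    assume "y 0 < 0" "\<not> y t < 0"
    then obtain x where "0 \<le> x" "x \<le> t" "y x = 0" using IVT'[of y 0 0 t, OF _ _ t c'] by auto
    then show False using nz by auto
  qed
qed

lemma deriv_mono:
  fixes y :: "real \<Rightarrow> real" and y' :: "real \<Rightarrow> real"
  assumes der: "\<And>t. t \<ge> 0 \<Longrightarrow> (y has_real_derivative y' t) (at t within {0..})"
    and neg: "\<And>t. t \<ge> 0 \<Longrightarrow> y' t \<le> 0"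
    and ab: "0 \<le> a" "a \<le> b"
  shows "y b \<le> y a"
proof (rule DERIV_nonpos_imp_decreasing_open[of a b y])
  show "a \<le> b" by fact
  fix x assume x: "a < x" "x < b"
  have "(y has_real_derivative y' x) (at x)"
    using der[of x] x ab at_within_interior[of x "{0..}"] by simp
  then show "\<exists>d. (y has_real_derivative d) (at x) \<and> d \<le> 0" using neg[of x] x ab by auto
next
  have "continuous_on {0..} y"
    by (rule continuous_on_vector_derivative[where f'=y'])
       (use der in \<open>auto simp: has_real_derivative_iff_has_vector_derivative\<close>)
  then show "continuous_on {a..b} y" by (rule continuous_on_subset) (use ab in auto)
qed

theorem theorem1:
  fixes \<kappa> \<gamma> chi \<Omega> \<omega> :: real
    and Q S :: complex
    and F :: "real \<Rightarrow> complex"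
  assumes kpos: "\<kappa> > 0" and gpos: "\<gamma> > 0"
    and Q_def: "Q = - (complex_of_real \<gamma> + \<i> * complex_of_real \<Omega> - \<i> * complex_of_real \<omega>)"
    and S_def: "S = complex_of_real (\<gamma> * chi / 2)"
    and ode: "\<And>t. t \<ge> 0 \<Longrightarrow>
       (F has_vector_derivative (complex_of_real \<kappa> * (F t)\<^sup>2 + Q * F t + S)) (at t within {0..})"
    and init: "F 0 = 0"
    and res: "\<omega> = \<Omega>"
    and disc: "Re (4 * complex_of_real \<kappa> * S - Q\<^sup>2) \<le> 0"
  shows "(\<exists>L. (F \<longlongrightarrow> L) at_top)
     \<and> (\<exists>c. ((\<lambda>t. complex_of_real \<kappa> * (F t + cnj (F t))) \<longlongrightarrow> c) at_top)
     \<and> (\<exists>c. ((\<lambda>t. complex_of_real \<kappa> * cnj (F t)) \<longlongrightarrow> c) at_top)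
     \<and> (\<exists>c. ((\<lambda>t. complex_of_real \<kappa> * F t) \<longlongrightarrow> c) at_top)"
proof -
  define s0 where "s0 = \<gamma> * chi / 2"
  have Q: "Q = - complex_of_real \<gamma>" using Q_def res by simp
  have S: "S = complex_of_real s0" using S_def s0_def by (simp only:)
  define u where "u t = Re (F t)" for t
  define v where "v t = Im (F t)" for t
  have Fc: "continuous_on {0..} F"
    by (rule continuous_on_vector_derivative) (use ode in auto)
  have uc: "continuous_on {0..} u" unfolding u_def by (intro continuous_intros Fc)
  have du: "(u has_real_derivative (\<kappa> * ((u t)^2 - (v t)^2) - \<gamma> * u t + s0)) (at t within {0..})"
    if "t \<ge> 0" for t
    using has_field_derivative_Re[OF ode[OF that]] unfolding u_def v_def Q S
    by (simp add: power2_eq_square)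
  have dv: "(v has_real_derivative (v t * (2 * \<kappa> * u t - \<gamma>))) (at t within {0..})"
    if "t \<ge> 0" for t
    using has_field_derivative_Im[OF ode[OF that]] unfolding u_def v_def Q S
    by (simp add: power2_eq_square algebra_simps)
  have v0: "v t = 0" if "t \<ge> 0" for t
    by (rule gronwall_zero[OF dv _ _ _ that, of 0]) (auto simp: v_def init intro!: continuous_intros uc)
  have Fu: "F t = complex_of_real (u t)" if "t \<ge> 0" for t
    using v0[OF that] unfolding u_def v_def by (simp add: complex_eq_iff)
  have du2: "(u has_real_derivative (\<kappa> * (u t)^2 - \<gamma> * u t + s0)) (at t within {0..})"
    if "t \<ge> 0" for t using du[OF that] v0[OF that] by simp
  have "4 * complex_of_real \<kappa> * S - Q\<^sup>2 = complex_of_real (4 * \<kappa> * s0 - \<gamma>^2)"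
    unfolding Q S by simp
  then have dpos: "\<gamma>^2 - 4 * \<kappa> * s0 \<ge> 0" using disc by (metis Re_complex_of_real diff_ge_0_iff_ge diff_le_0_iff_le)
  define d where "d = sqrt (\<gamma>^2 - 4 * \<kappa> * s0)"
  have d0: "d \<ge> 0" unfolding d_def using dpos by simp
  have dsq: "d^2 = \<gamma>^2 - 4 * \<kappa> * s0" unfolding d_def using dpos by simp
  define r1 where "r1 = (\<gamma> - d) / (2 * \<kappa>)"
  define \<delta> where "\<delta> = d / \<kappa>"
  define D where "D t = u t - r1" for t
  define E where "E t = D t - \<delta>" for t
  have alg: "\<kappa> * x^2 - \<gamma> * x + s0 = (x - r1) * (\<kappa> * (x - r1 - \<delta>))" for x
  proof -
    have h: "d*d + \<kappa>*(s0*4) = \<gamma>*\<gamma>" using dsq by (simp add: power2_eq_square algebra_simps)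
    have "\<kappa> * (\<kappa> * (d * d)) + \<kappa> * (\<kappa> * (\<kappa> * (s0 * 4))) = \<gamma> * (\<gamma> * (\<kappa> * \<kappa>))"
      using arg_cong[OF h, of "\<lambda>z. \<kappa>*\<kappa>*z"] by (simp add: algebra_simps)
    then show ?thesis unfolding r1_def \<delta>_def using kpos
      by (simp add: field_simps power2_eq_square)
  qed
  have dD: "(D has_real_derivative (D t * (\<kappa> * E t))) (at t within {0..})" if "t \<ge> 0" for t
    using du2[OF that] unfolding D_def E_def alg by (auto intro!: derivative_eq_intros)
  have dE: "(E has_real_derivative (E t * (\<kappa> * D t))) (at t within {0..})" if "t \<ge> 0" for t
    using dD[OF that] unfolding E_def by (auto intro!: derivative_eq_intros simp: D_def[symmetric])
  have Dc: "continuous_on {0..} D" unfolding D_def by (intro continuous_intros uc)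
  have Ec: "continuous_on {0..} E" unfolding E_def by (intro continuous_intros Dc)
  have u0: "u 0 = 0" using init unfolding u_def by simp
  have E0: "E 0 < 0"
  proof -
    have "E 0 = - (\<gamma> + d) / (2 * \<kappa>)" unfolding E_def D_def u0 r1_def \<delta>_def using kpos
      by (simp add: field_simps)
    then show ?thesis using kpos gpos d0 by (simp add: divide_neg_pos)
  qed
  have Enz: "E t \<noteq> 0" if "t \<ge> 0" for t
  proof
    assume "E t = 0"
    have "continuous_on {0..} (\<lambda>t. \<kappa> * D t)" by (intro continuous_intros Dc)
    then have "E 0 = 0" using gronwall_zero[OF dE _ that \<open>E t = 0\<close>, of 0] by auto
    then show False using E0 by simp
  qed
  have Eneg: "E t < 0" if "t \<ge> 0" for t using sign_const(2)[OF Ec Enz that E0] .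
  have kE: "continuous_on {0..} (\<lambda>t. \<kappa> * E t)" by (intro continuous_intros Ec)
  have uconv: "\<exists>L. (u \<longlongrightarrow> L) at_top"
  proof (cases "D 0 = 0")
    case True
    then have "D t = 0" if "t \<ge> 0" for t using gronwall_zero[OF dD kE _ True that] by auto
    note Dz = this
    have "\<forall>\<^sub>F t in at_top. r1 = u t" using eventually_ge_at_top[of "0::real"]
      by eventually_elim (use Dz in \<open>auto simp: D_def\<close>)
    then have "(u \<longlongrightarrow> r1) at_top" using tendsto_cong[of "\<lambda>t. r1" u at_top r1] by simp
    then show ?thesis by blast
  next
    case False
    have Dnz: "D t \<noteq> 0" if "t \<ge> 0" for t
    proof
      assume "D t = 0"
      then show False using gronwall_zero[OF dD kE _ _ order_refl, of t] False that by auto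
    qed
    have "\<exists>L. (D \<longlongrightarrow> L) at_top"
    proof (cases "D 0 > 0")
      case True
      have pos: "D t > 0" if "t \<ge> 0" for t using sign_const(1)[OF Dc Dnz that True] .
      show ?thesis
      proof (rule decr_conv)
        show "D b \<le> D a" if "0 \<le> a" "a \<le> b" for a b
        proof (rule deriv_mono[OF dD _ that])
          fix t :: real assume "t \<ge> 0"
          then have "\<kappa> * E t < 0" "D t > 0" using pos Eneg kpos by (auto intro: mult_pos_neg)
          then show "D t * (\<kappa> * E t) \<le> 0" using mult_pos_neg less_imp_le by blast
        qed
      qed (use pos in \<open>auto simp: less_imp_le\<close>)
    next
      case F2: False
      have neg: "D t < 0" if "t \<ge> 0" for t using sign_const(2)[OF Dc Dnz that] F2 False by auto
      have dmD: "((\<lambda>t. - D t) has_real_derivative (- (D t * (\<kappa> * E t)))) (at t within {0..})"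
        if "t \<ge> 0" for t using dD[OF that] by (auto intro!: derivative_eq_intros)
      have "\<exists>L. ((\<lambda>t. - D t) \<longlongrightarrow> L) at_top"
      proof (rule decr_conv)
        show "- D b \<le> - D a" if "0 \<le> a" "a \<le> b" for a b
        proof (rule deriv_mono[OF dmD _ that])
          fix t :: real assume t: "t \<ge> 0"
          have "\<kappa> * E t < 0" using Eneg[OF t] kpos by (rule_tac mult_pos_neg) auto
          then have "D t * (\<kappa> * E t) > 0" using neg[OF t] by (rule_tac mult_neg_neg) auto
          then show "- (D t * (\<kappa> * E t)) \<le> 0" by simp
        qed
      qed (use neg in \<open>auto simp: less_imp_le\<close>)
      then obtain L where "((\<lambda>t. - D t) \<longlongrightarrow> L) at_top" by blast
      from tendsto_minus[OF this] show ?thesis by auto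
    qed
    then obtain L where "(D \<longlongrightarrow> L) at_top" by blast
    from tendsto_add[OF this tendsto_const[of r1]] have "((\<lambda>t. D t + r1) \<longlongrightarrow> L + r1) at_top" .
    then show ?thesis unfolding D_def by auto
  qed
  then obtain L where uL: "(u \<longlongrightarrow> L) at_top" by blast
  have FL: "(F \<longlongrightarrow> complex_of_real L) at_top"
  proof -
    have "((\<lambda>t. complex_of_real (u t)) \<longlongrightarrow> complex_of_real L) at_top"
      by (rule tendsto_of_real[OF uL])
    moreover have "\<forall>\<^sub>F t in at_top. complex_of_real (u t) = F t"
      using eventually_ge_at_top[of "0::real"] by eventually_elim (simp add: Fu)
    ultimately show ?thesis by (rule tendsto_cong[THEN iffD1, rotated])
  qed
  have c1: "((\<lambda>t. complex_of_real \<kappa> * (F t + cnj (F t))) \<longlongrightarrow> complex_of_real \<kappa> * (complex_of_real L + cnj (complex_of_real L))) at_top"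
    by (intro tendsto_mult tendsto_const tendsto_add tendsto_cnj FL)
  have c2: "((\<lambda>t. complex_of_real \<kappa> * cnj (F t)) \<longlongrightarrow> complex_of_real \<kappa> * cnj (complex_of_real L)) at_top"
    by (intro tendsto_mult tendsto_const tendsto_cnj FL)
  have c3: "((\<lambda>t. complex_of_real \<kappa> * F t) \<longlongrightarrow> complex_of_real \<kappa> * complex_of_real L) at_top"
    by (intro tendsto_mult tendsto_const FL)
  show ?thesis using FL c1 c2 c3 by blast
qed

end
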